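(* Let $H\in\mathbb{R}^{n\times n}$ be symmetric with $\lambda_{\min}(H)<0$ and unit eigenvector $v_1$ for $\lambda_{\min}(H)$, let $g\in\mathbb{R}^n$ with $g^\intercal v_1\neq0$, let $f(z)=\frac12z^\intercal Hz+g^\intercal z$ and $\beta=\|H\|_{\mathrm{op}}$. Let $0<\eta<1/\beta$ and $z_0=-\alpha\frac{g}{\|g\|}$ with $0<\alpha<\min\big(1,\frac{\|g\|^3}{|g^\intercal Hg|}\big)$, and let $z_{s+1}=z_s-\eta\nabla f(z_s)$ for $s\ge0$. Suppose $t$ is such that $\|z_s\|\le 1$ for $s=0,\dots,t$ and $z_t^\intercal\nabla f(z_t)\le 0$. Then $z_t^\intercal H\nabla f(z_t)\ge \beta\, z_t^\intercal\nabla f(z_t)$.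
   Context: $\nabla f(z)=Hz+g$; $\|H\|_{\mathrm{op}}$ is the operator norm. *)

theory Defs
  imports "HOL-Analysis.Analysis"
begin

definition is_min_eigenvalue :: "real^'n^'n \<Rightarrow> real \<Rightarrow> bool" where
  "is_min_eigenvalue H lam \<longleftrightarrow>
     (\<exists>v. v \<noteq> 0 \<and> H *v v = lam *\<^sub>R v) \<and>
     (\<forall>mu v. v \<noteq> 0 \<and> H *v v = mu *\<^sub>R v \<longrightarrow> lam \<le> mu)"

text \<open>Gradient of f(z) = 1/2 z^T H z + g^T z.\<close>
definition gradf :: "real^'n^'n \<Rightarrow> real^'n \<Rightarrow> real^'n \<Rightarrow> real^'n" where
  "gradf H g z = H *v z + g"

end

theory Submission
  imports Defs
begin

definition Rop :: "real^'n^'n \<Rightarrow> real \<Rightarrow> real^'n \<Rightarrow> real^'n" where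
  "Rop H eta x = x - eta *\<^sub>R (H *v x)"

definition Rp :: "real^'n^'n \<Rightarrow> real \<Rightarrow> nat \<Rightarrow> real^'n \<Rightarrow> real^'n" where
  "Rp H eta m = Rop H eta ^^ m"

lemma Rop_linear: "linear (Rop H eta)"
  by (rule linearI) (simp_all add: Rop_def matrix_vector_right_distrib matrix_vector_mult_scaleR algebra_simps)

lemma Rp_linear: "linear (Rp H eta m)"
proof (induction m)
  case 0 then show ?case by (simp add: Rp_def linear_id[unfolded id_def])
next
  case (Suc m)
  have "Rp H eta (Suc m) = Rop H eta \<circ> Rp H eta m" by (simp add: Rp_def)
  then show ?case using linear_compose[OF Suc Rop_linear] by metis
qed

lemma Rp_Suc: "Rp H eta (Suc m) x = Rop H eta (Rp H eta m x)" by (simp add: Rp_def)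
lemma Rp_Suc': "Rp H eta (Suc m) x = Rp H eta m (Rop H eta x)" by (simp add: Rp_def funpow_Suc_right del: funpow.simps)
lemma Rp_add: "Rp H eta (m + k) x = Rp H eta m (Rp H eta k x)" by (simp add: Rp_def funpow_add)
lemma Rp_0: "Rp H eta 0 x = x" by (simp add: Rp_def)

lemma Rop_comm: "H *v Rop H eta x = Rop H eta (H *v x)"
  by (simp add: Rop_def matrix_vector_right_distrib matrix_vector_mult_diff_distrib matrix_vector_mult_scaleR)

lemma Rp_comm: "H *v Rp H eta m x = Rp H eta m (H *v x)"
  by (induction m arbitrary: x) (simp_all add: Rp_Suc' Rp_0 Rop_comm)

lemma symH_dot: fixes H :: "real^'n^'n" assumes "transpose H = H" shows "(H *v x) \<bullet> y = x \<bullet> (H *v y)"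
proof -
  have "(H *v x) \<bullet> y = (transpose H *v x) \<bullet> y" by (simp add: assms)
  also have "\<dots> = x \<bullet> (H *v y)" by (subst transpose_matrix_vector) (rule dot_lmul_matrix)
  finally show ?thesis .
qed

lemma Rop_sym: assumes "transpose H = H" shows "Rop H eta x \<bullet> y = x \<bullet> Rop H eta y"
  by (simp add: Rop_def inner_diff_left inner_diff_right symH_dot[OF assms])

lemma Rp_sym: assumes "transpose H = H" shows "Rp H eta m x \<bullet> y = x \<bullet> Rp H eta m y"
proof (induction m arbitrary: x y)
  case 0 then show ?case by (simp add: Rp_0)
next
  case (Suc m)
  have "Rp H eta (Suc m) x \<bullet> y = Rp H eta m x \<bullet> Rop H eta y" by (simp only: Rp_Suc Rop_sym[OF assms])
  also have "\<dots> = x \<bullet> Rp H eta (Suc m) y" by (simp only: Suc Rp_Suc')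
  finally show ?case .
qed

lemma quad_le: fixes H :: "real^'n^'n" assumes "transpose H = H" shows "x \<bullet> (H *v x) \<le> onorm ((*v) H) * (x \<bullet> x)"
proof -
  have bl: "bounded_linear ((*v) H)" using matrix_vector_mul_linear linear_conv_bounded_linear by blast
  have "x \<bullet> (H *v x) \<le> norm x * norm (H *v x)" by (metis Cauchy_Schwarz_ineq2 abs_le_D1)
  also have "\<dots> \<le> norm x * (onorm ((*v) H) * norm x)" by (simp add: mult_left_mono onorm[OF bl])
  also have "\<dots> = onorm ((*v) H) * (x \<bullet> x)" by (simp add: power2_eq_square power2_norm_eq_inner[symmetric])
  finally show ?thesis .
qed


lemma Rp_P: "Rp H eta m (c *\<^sub>R x - H *v x) = c *\<^sub>R Rp H eta m x - H *v Rp H eta m x"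
  using Rp_linear[of H eta m] by (simp add: linear_diff linear_scale Rp_comm)

lemma Rop_P: "Rop H eta (c *\<^sub>R x - H *v x) = c *\<^sub>R Rop H eta x - H *v Rop H eta x"
  using Rop_linear[of H eta] by (simp add: linear_diff linear_scale Rop_comm)

lemma P_sym: fixes H :: "real^'n^'n" assumes "transpose H = H"
  shows "(c *\<^sub>R x - H *v x) \<bullet> y = x \<bullet> (c *\<^sub>R y - H *v y)"
  by (simp add: inner_diff_left inner_diff_right symH_dot[OF assms])

lemma even_odd_split: obtains j where "m = j + j" | j where "m = j + Suc j"
proof (cases "even m")
  case True
  then obtain j where "m = 2 * j" by (rule evenE)
  then have "m = j + j" by simp
  then show ?thesis by (rule that(1))
next
  case False
  then obtain j where "m = 2 * j + 1" by (rule oddE)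
  then have "m = j + Suc j" by simp
  then show ?thesis by (rule that(2))
qed

lemma psdA:
  assumes sym: "transpose H = H" and e0: "0 \<le> eta" and eb: "eta * onorm ((*v) H) \<le> 1"
  shows "0 \<le> x \<bullet> Rp H eta m x"
proof (cases m rule: even_odd_split)
  case (1 j)
  then have "x \<bullet> Rp H eta m x = Rp H eta j x \<bullet> Rp H eta j x"
    by (simp add: Rp_add Rp_sym[OF sym])
  then show ?thesis by simp
next
  case (2 j)
  define y where "y = Rp H eta j x"
  have "Rp H eta m x = Rp H eta j (Rop H eta y)" by (simp only: 2 Rp_add Rp_Suc y_def)
  then have "x \<bullet> Rp H eta m x = y \<bullet> Rop H eta y"
    by (simp only: Rp_sym[OF sym, symmetric] y_def)
  also have "\<dots> = y \<bullet> y - eta * (y \<bullet> (H *v y))" by (simp add: Rop_def inner_diff_right)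
  also have "\<dots> \<ge> 0"
  proof -
    have "eta * (y \<bullet> (H *v y)) \<le> eta * (onorm ((*v) H) * (y \<bullet> y))"
      using quad_le[OF sym] e0 mult_left_mono by blast
    also have "\<dots> \<le> y \<bullet> y" using eb mult_right_mono[OF eb, of "y \<bullet> y"] by (simp add: mult.assoc)
    finally show ?thesis by simp
  qed
  finally show ?thesis .
qed

lemma psdB:
  assumes sym: "transpose H = H" and e0: "0 \<le> eta" and eb: "eta * onorm ((*v) H) \<le> 1"
  defines "b \<equiv> onorm ((*v) H)"
  shows "0 \<le> x \<bullet> Rp H eta m (b *\<^sub>R x - H *v x)"
proof -
  have Pnn: "0 \<le> y \<bullet> (b *\<^sub>R y - H *v y)" for y
    using quad_le[OF sym, of y] by (simp add: b_def inner_diff_right)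
  show ?thesis
  proof (cases m rule: even_odd_split)
    case (1 j)
    then have "x \<bullet> Rp H eta m (b *\<^sub>R x - H *v x) = Rp H eta j x \<bullet> (b *\<^sub>R Rp H eta j x - H *v Rp H eta j x)"
      by (simp add: Rp_add Rp_sym[OF sym] Rp_P)
    then show ?thesis using Pnn by simp
  next
    case (2 j)
    define y where "y = Rp H eta j x"
    define p where "p = b *\<^sub>R y - H *v y"
    have "Rp H eta m (b *\<^sub>R x - H *v x) = Rp H eta j (Rop H eta p)"
      by (simp only: 2 Rp_add Rp_Suc y_def p_def Rp_P Rop_P)
    then have e1: "x \<bullet> Rp H eta m (b *\<^sub>R x - H *v x) = y \<bullet> Rop H eta p"
      by (simp only: Rp_sym[OF sym, symmetric] y_def)
    have e2: "Rop H eta p = (1 - eta * b) *\<^sub>R p + eta *\<^sub>R (b *\<^sub>R p - H *v p)"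
      by (simp add: Rop_def algebra_simps)
    have e3: "y \<bullet> (b *\<^sub>R p - H *v p) = p \<bullet> p"
      using P_sym[OF sym, of b y p] unfolding p_def[symmetric] by simp
    have "x \<bullet> Rp H eta m (b *\<^sub>R x - H *v x) = (1 - eta * b) * (y \<bullet> p) + eta * (p \<bullet> p)"
      using e1 e2 e3 by (simp add: inner_add_right)
    moreover have "0 \<le> (1 - eta * b) * (y \<bullet> p) + eta * (p \<bullet> p)"
      using Pnn[of y] eb e0 by (simp add: p_def b_def)
    ultimately show ?thesis by simp
  qed
qed

lemma psdC:
  assumes sym: "transpose H = H" and e0: "0 \<le> eta" and eb: "eta * onorm ((*v) H) \<le> 1"
  shows "0 \<le> x \<bullet> Rp H eta m (c *\<^sub>R (c *\<^sub>R x - H *v x) - H *v (c *\<^sub>R x - H *v x))"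
proof -
  have "x \<bullet> Rp H eta m (c *\<^sub>R (c *\<^sub>R x - H *v x) - H *v (c *\<^sub>R x - H *v x))
     = (c *\<^sub>R x - H *v x) \<bullet> Rp H eta m (c *\<^sub>R x - H *v x)"
    using P_sym[OF sym, of c x "Rp H eta m (c *\<^sub>R x - H *v x)"] Rp_P[of H eta m c "c *\<^sub>R x - H *v x"]
    by simp
  then show ?thesis using psdA[OF sym e0 eb] by simp
qed


theorem lemma4:
  fixes H :: "real^'n^'n" and g v1 :: "real^'n" and lam beta eta alpha :: real
    and z :: "nat \<Rightarrow> real^'n" and t :: nat
  assumes symH: "transpose H = H"
    and minev: "is_min_eigenvalue H lam" and lam_neg: "lam < 0"
    and v1_eig: "H *v v1 = lam *\<^sub>R v1" and v1_unit: "norm v1 = 1"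
    and gv1: "g \<bullet> v1 \<noteq> 0"
    and beta_def: "beta = onorm (\<lambda>x. H *v x)"
    and eta_pos: "0 < eta" and eta_lt: "eta < 1 / beta"
    and alpha_pos: "0 < alpha" and alpha_lt1: "alpha < 1"
    and alpha_lt2: "alpha * \<bar>g \<bullet> (H *v g)\<bar> < norm g ^ 3"
    and z0: "z 0 = - (alpha / norm g) *\<^sub>R g"
    and zstep: "\<And>s. z (Suc s) = z s - eta *\<^sub>R gradf H g (z s)"
    and zbound: "\<And>s. s \<le> t \<Longrightarrow> norm (z s) \<le> 1"
    and zt: "z t \<bullet> gradf H g (z t) \<le> 0"
  shows "z t \<bullet> (H *v gradf H g (z t)) \<ge> beta * (z t \<bullet> gradf H g (z t))"
proof -
  have bdef: "beta = onorm ((*v) H)" using beta_def by simp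
  have bl: "bounded_linear ((*v) H)" using matrix_vector_mul_linear linear_conv_bounded_linear by blast
  have b0: "0 \<le> beta" using onorm_pos_le[OF bl] bdef by simp
  have bpos: "0 < beta" using eta_lt eta_pos b0 by (cases "beta = 0") auto
  have eb: "eta * onorm ((*v) H) \<le> 1" using eta_lt bpos bdef by (simp add: field_simps)
  have e0: "0 \<le> eta" using eta_pos by simp
  have gne: "g \<noteq> 0" using gv1 by auto
  define a where "a = alpha / norm g"
  have a0: "0 < a" using alpha_pos gne by (simp add: a_def)
  define th where "th = min (1 / a) beta"
  have thb: "th \<le> beta" by (simp add: th_def)
  have ath: "a * th \<le> 1" using a0 by (simp add: th_def min_def field_simps)
  have thcase: "a * th = 1 \<or> th = beta" using a0 by (auto simp: th_def min_def field_simps)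
  define P where "P = (\<lambda>x. th *\<^sub>R x - H *v x)"
  define u0 where "u0 = g - a *\<^sub>R (H *v g)"
  have U: "gradf H g (z s) = Rp H eta s u0" for s
  proof (induction s)
    case 0 then show ?case by (simp add: gradf_def z0 a_def u0_def Rp_0 matrix_vector_mult_scaleR linear_neg[OF matrix_vector_mul_linear])
  next
    case (Suc s)
    have "gradf H g (z (Suc s)) = Rop H eta (gradf H g (z s))"
      by (simp add: zstep gradf_def Rop_def matrix_vector_right_distrib matrix_vector_mult_diff_distrib matrix_vector_mult_scaleR algebra_simps)
    then show ?case by (simp add: Suc Rp_Suc)
  qed
  have Z: "z s = - (a *\<^sub>R Rp H eta s g + eta *\<^sub>R (\<Sum>k<s. Rp H eta k g))" for s
  proof (induction s)
    case 0 then show ?case by (simp add: z0 a_def Rp_0)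
  next
    case (Suc s)
    have lin: "linear (Rp H eta s)" by (rule Rp_linear)
    have "Rp H eta (Suc s) g = Rp H eta s g - eta *\<^sub>R Rp H eta s (H *v g)"
      by (simp add: Rp_Suc' Rop_def linear_diff[OF lin] linear_scale[OF lin])
    moreover have "Rp H eta s u0 = Rp H eta s g - a *\<^sub>R Rp H eta s (H *v g)"
      by (simp add: u0_def linear_diff[OF lin] linear_scale[OF lin])
    moreover have "z (Suc s) = z s - eta *\<^sub>R Rp H eta s u0" using zstep U by simp
    ultimately have "z (Suc s) = - (a *\<^sub>R Rp H eta s g + eta *\<^sub>R (\<Sum>k<s. Rp H eta k g))
        - eta *\<^sub>R (Rp H eta s g - a *\<^sub>R Rp H eta s (H *v g))"
      using Suc by simp
    then show ?case
      by (simp only: \<open>Rp H eta (Suc s) g = Rp H eta s g - eta *\<^sub>R Rp H eta s (H *v g)\<close> sum.lessThan_Suc)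
        (simp add: algebra_simps)
  qed
  define w where "w = P u0"
  have wdef: "w = (1 - a * th) *\<^sub>R P g + a *\<^sub>R P (P g)"
    by (simp add: w_def P_def u0_def matrix_vector_right_distrib matrix_vector_mult_diff_distrib matrix_vector_mult_scaleR algebra_simps)
  have G: "0 \<le> g \<bullet> Rp H eta n w" for n
  proof -
    have lin: "linear (Rp H eta n)" by (rule Rp_linear)
    have eq: "g \<bullet> Rp H eta n w = (1 - a * th) * (g \<bullet> Rp H eta n (P g)) + a * (g \<bullet> Rp H eta n (P (P g)))"
      by (simp add: wdef linear_add[OF lin] linear_scale[OF lin] inner_add_right)
    have t1: "0 \<le> (1 - a * th) * (g \<bullet> Rp H eta n (P g))"
      using thcase
    proof
      assume "a * th = 1" then show ?thesis by simp
    next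
      assume "th = beta"
      then have "0 \<le> g \<bullet> Rp H eta n (P g)" using psdB[OF symH e0 eb, of g n] by (simp add: P_def bdef)
      then show ?thesis using ath by simp
    qed
    have t2: "0 \<le> g \<bullet> Rp H eta n (P (P g))"
      using psdC[OF symH e0 eb, of g n th] by (simp add: P_def)
    show ?thesis using eq t1 t2 a0 by simp
  qed
  define u where "u = gradf H g (z t)"
  have Pu: "P u = Rp H eta t w" by (simp add: u_def U w_def P_def Rp_P)
  have key: "z t \<bullet> P u \<le> 0"
  proof -
    have "z t \<bullet> P u = - (a * (Rp H eta t g \<bullet> Rp H eta t w) + eta * (\<Sum>k<t. Rp H eta k g \<bullet> Rp H eta t w))"
      by (simp add: Z Pu inner_add_left inner_diff_left inner_sum_left)
    also have "\<dots> = - (a * (g \<bullet> Rp H eta (t + t) w) + eta * (\<Sum>k<t. g \<bullet> Rp H eta (k + t) w))"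
      by (simp add: Rp_sym[OF symH] Rp_add)
    also have "\<dots> \<le> 0"
    proof -
      have "0 \<le> a * (g \<bullet> Rp H eta (t + t) w)" using G a0 by simp
      moreover have "0 \<le> eta * (\<Sum>k<t. g \<bullet> Rp H eta (k + t) w)"
        using G e0 by (simp add: sum_nonneg)
      ultimately show ?thesis by linarith
    qed
    finally show ?thesis .
  qed
  have zu: "z t \<bullet> u \<le> 0" using zt u_def by simp
  have "z t \<bullet> (H *v u) \<ge> th * (z t \<bullet> u)"
    using key by (simp add: P_def inner_diff_right)
  moreover have "th * (z t \<bullet> u) \<ge> beta * (z t \<bullet> u)"
    using thb zu by (simp add: mult_right_mono_neg)
  ultimately show ?thesis by (simp add: u_def)
qed

end
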